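(* For every integer $k\ge 3$, $$F_v(J_k,J_k;k)\le\left\lceil\frac{5F_v(k-1,k-1;k)}{2}\right\rceil.$$
   Context: All graphs are finite and simple. $J_n$ denotes $K_n$ with one edge removed. An integer $a$ used in place of a graph denotes $K_a$. "A graph $F$ contains $H$" means $F$ has a (not necessarily induced) subgraph isomorphic to $H$. $G\rightarrow(H_1,H_2)^v$ means: for every partition $V(G)=X_1\cup X_2$ there is $i$ such that the subgraph induced by $X_i$ contains $H_i$. $F_v(H_1,H_2;k)$ is the minimum number of vertices of a $K_k$-free graph $G$ with $G\rightarrow(H_1,H_2)^v$. *)

theory Defs
  imports Complex_Main
begin

type_synonym graph = "nat set \<times> (nat \<Rightarrow> nat \<Rightarrow> bool)"

definition verts :: "graph \<Rightarrow> nat set" where "verts G = fst G"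
definition adj :: "graph \<Rightarrow> nat \<Rightarrow> nat \<Rightarrow> bool" where "adj G = snd G"

definition simple_graph :: "graph \<Rightarrow> bool" where
  "simple_graph G \<longleftrightarrow> finite (verts G) \<and>
     (\<forall>x y. adj G x y \<longrightarrow> x \<in> verts G \<and> y \<in> verts G \<and> x \<noteq> y) \<and>
     (\<forall>x y. adj G x y \<longrightarrow> adj G y x)"

definition contains :: "graph \<Rightarrow> graph \<Rightarrow> bool" where
  "contains F H \<longleftrightarrow> (\<exists>f. inj_on f (verts H) \<and> f ` verts H \<subseteq> verts F \<and>
     (\<forall>x\<in>verts H. \<forall>y\<in>verts H. adj H x y \<longrightarrow> adj F (f x) (f y)))"

definition induced :: "graph \<Rightarrow> nat set \<Rightarrow> graph" where
  "induced G X = (verts G \<inter> X, \<lambda>x y. adj G x y \<and> x \<in> X \<and> y \<in> X)"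

definition Kg :: "nat \<Rightarrow> graph" where
  "Kg a = ({0..<a}, \<lambda>x y. x < a \<and> y < a \<and> x \<noteq> y)"

definition Jg :: "nat \<Rightarrow> graph" where
  "Jg n = ({0..<n}, \<lambda>x y. x < n \<and> y < n \<and> x \<noteq> y \<and> {x, y} \<noteq> {0, 1})"

definition vertex_arrows :: "graph \<Rightarrow> graph \<Rightarrow> graph \<Rightarrow> bool" where
  "vertex_arrows G H1 H2 \<longleftrightarrow> (\<forall>X1 X2. X1 \<union> X2 = verts G \<and> X1 \<inter> X2 = {} \<longrightarrow>
     contains (induced G X1) H1 \<or> contains (induced G X2) H2)"

definition Fv :: "graph \<Rightarrow> graph \<Rightarrow> nat \<Rightarrow> nat" where
  "Fv H1 H2 k = (LEAST n. \<exists>G. simple_graph G \<and> card (verts G) = n \<and>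
     \<not> contains G (Kg k) \<and> vertex_arrows G H1 H2)"

end

theory Submission
  imports Defs
begin

lemma verts_induced[simp]: "verts (induced G X) = verts G \<inter> X" by (simp add: induced_def verts_def)
lemma adj_induced[simp]: "adj (induced G X) x y = (adj G x y \<and> x \<in> X \<and> y \<in> X)" by (simp add: induced_def adj_def)
lemma verts_Kg[simp]: "verts (Kg a) = {0..<a}" by (simp add: Kg_def verts_def)
lemma adj_Kg[simp]: "adj (Kg a) x y = (x < a \<and> y < a \<and> x \<noteq> y)" by (simp add: Kg_def adj_def)
lemma verts_Jg[simp]: "verts (Jg a) = {0..<a}" by (simp add: Jg_def verts_def)
lemma adj_Jg[simp]: "adj (Jg a) x y = (x < a \<and> y < a \<and> x \<noteq> y \<and> {x, y} \<noteq> {0, 1})" by (simp add: Jg_def adj_def)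

lemma contains_mono:
  assumes "contains F' H" "verts F' \<subseteq> verts F" "\<And>x y. adj F' x y \<Longrightarrow> adj F x y"
  shows "contains F H"
proof -
  obtain f where f: "inj_on f (verts H)" "f ` verts H \<subseteq> verts F'"
     "\<forall>x\<in>verts H. \<forall>y\<in>verts H. adj H x y \<longrightarrow> adj F' (f x) (f y)"
    using assms(1) unfolding contains_def by blast
  show ?thesis unfolding contains_def
    using f assms(2,3) by (intro exI[of _ f]) blast
qed

lemma induced_induced: "X \<subseteq> W \<Longrightarrow> induced (induced G W) X = induced G X"
  unfolding induced_def[of "induced G W"] by (auto simp: induced_def verts_def adj_def fun_eq_iff)

lemma simple_induced: "simple_graph G \<Longrightarrow> simple_graph (induced G X)"
  unfolding simple_graph_def by auto

lemma contains_induced_sub: "contains (induced G X) H \<Longrightarrow> contains G H"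
  by (erule contains_mono) auto

lemma Kg_in_Jg:
  assumes "k \<ge> 1" "contains F (Jg k)" shows "contains F (Kg (k-1))"
proof -
  obtain f where f: "inj_on f {0..<k}" "f ` {0..<k} \<subseteq> verts F"
    "\<forall>x\<in>{0..<k}. \<forall>y\<in>{0..<k}. adj (Jg k) x y \<longrightarrow> adj F (f x) (f y)"
    using assms(2) unfolding contains_def by auto
  show ?thesis unfolding contains_def
  proof (intro exI[of _ "\<lambda>i. f (i+1)"] conjI)
    show "inj_on (\<lambda>i. f (i + 1)) (verts (Kg (k - 1)))"
    proof (rule inj_onI)
      fix x y assume "x \<in> verts (Kg (k - 1))" "y \<in> verts (Kg (k - 1))" "f (x+1) = f (y+1)"
      then have "x+1 \<in> {0..<k}" "y+1 \<in> {0..<k}" "f (x+1) = f (y+1)" by auto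
      from inj_onD[OF f(1) this(3,1,2)] show "x = y" by simp
    qed
    show "(\<lambda>i. f (i + 1)) ` verts (Kg (k - 1)) \<subseteq> verts F" using f(2) by auto
    show "\<forall>x\<in>verts (Kg (k - 1)). \<forall>y\<in>verts (Kg (k - 1)). adj (Kg (k - 1)) x y \<longrightarrow> adj F (f (x + 1)) (f (y + 1))"
    proof (intro ballI impI)
      fix x y assume "x \<in> verts (Kg (k - 1))" "y \<in> verts (Kg (k - 1))" "adj (Kg (k - 1)) x y"
      then have "adj (Jg k) (x+1) (y+1)" by (auto simp: doubleton_eq_iff)
      then show "adj F (f (x + 1)) (f (y + 1))" using f(3) by auto
    qed
  qed
qed

lemma arrows_J_K: "k \<ge> 1 \<Longrightarrow> vertex_arrows G (Jg k) (Jg k) \<Longrightarrow> vertex_arrows G (Kg (k-1)) (Kg (k-1))"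
  unfolding vertex_arrows_def using Kg_in_Jg by blast

definition mult :: "nat set \<Rightarrow> nat \<Rightarrow> nat" where "mult B v = (if v \<in> B then 2 else 3)"
definition blowV :: "graph \<Rightarrow> nat set \<Rightarrow> nat set" where
  "blowV G B = {x. x div 3 \<in> verts G \<and> x mod 3 < mult B (x div 3)}"
definition blow :: "graph \<Rightarrow> nat set \<Rightarrow> graph" where
  "blow G B = (blowV G B, \<lambda>x y. adj G (x div 3) (y div 3) \<and> x \<in> blowV G B \<and> y \<in> blowV G B)"

lemma verts_blow[simp]: "verts (blow G B) = blowV G B" by (simp add: blow_def verts_def)
lemma adj_blow[simp]: "adj (blow G B) x y = (adj G (x div 3) (y div 3) \<and> x \<in> blowV G B \<and> y \<in> blowV G B)"
  by (simp add: blow_def adj_def)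

lemma mult_le3: "mult B v \<le> 3" by (simp add: mult_def)
lemma mult_ge2: "2 \<le> mult B v" by (simp add: mult_def)

lemma blowV_mem: "v \<in> verts G \<Longrightarrow> i < mult B v \<Longrightarrow> 3*v+i \<in> blowV G B"
  using mult_le3[of B v] by (simp add: blowV_def)

lemma blowV_eq: "blowV G B = (\<lambda>(v,i). 3*v+i) ` (SIGMA v:verts G. {..<mult B v})"
proof (rule set_eqI, rule iffI)
  fix x assume "x \<in> blowV G B"
  then have "x = (\<lambda>(v,i). 3*v+i) (x div 3, x mod 3)" "(x div 3, x mod 3) \<in> (SIGMA v:verts G. {..<mult B v})"
    by (auto simp: blowV_def)
  then show "x \<in> (\<lambda>(v,i). 3*v+i) ` (SIGMA v:verts G. {..<mult B v})" by blast
next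
  fix x assume "x \<in> (\<lambda>(v,i). 3*v+i) ` (SIGMA v:verts G. {..<mult B v})"
  then show "x \<in> blowV G B" by (auto intro: blowV_mem)
qed

lemma blow_card:
  assumes "finite (verts G)" shows "card (blowV G B) = sum (mult B) (verts G)"
proof -
  have inj: "inj_on (\<lambda>(v,i). 3*v+i) (SIGMA v:verts G. {..<mult B v})"
  proof (rule inj_onI, clarify)
    fix a b c d assume "b < mult B a" "d < mult B c" "3*a+b = 3*c+d"
    then show "a = c \<and> b = d" using mult_le3[of B a] mult_le3[of B c] by presburger
  qed
  have "card (blowV G B) = card (SIGMA v:verts G. {..<mult B v})"
    unfolding blowV_eq using card_image[OF inj] .
  also have "\<dots> = sum (mult B) (verts G)" using assms by (simp add: card_SigmaI)
  finally show ?thesis .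
qed

lemma blow_finite: "finite (verts G) \<Longrightarrow> finite (blowV G B)"
  unfolding blowV_eq by auto

lemma blow_simple: "simple_graph G \<Longrightarrow> simple_graph (blow G B)"
  unfolding simple_graph_def by (auto simp: blow_finite)

lemma blow_Kfree:
  assumes sg: "simple_graph G" and nc: "\<not> contains G (Kg k)"
  shows "\<not> contains (blow G B) (Kg k)"
proof
  assume "contains (blow G B) (Kg k)"
  then obtain f where f: "inj_on f {0..<k}" "f ` {0..<k} \<subseteq> blowV G B"
    "\<forall>x\<in>{0..<k}. \<forall>y\<in>{0..<k}. x \<noteq> y \<longrightarrow> adj G (f x div 3) (f y div 3)"
    unfolding contains_def by auto
  have irr: "\<And>u. \<not> adj G u u" using sg unfolding simple_graph_def by blast
  have "contains G (Kg k)" unfolding contains_def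
  proof (intro exI[of _ "\<lambda>i. f i div 3"] conjI)
    show "inj_on (\<lambda>i. f i div 3) (verts (Kg k))"
    proof (rule inj_onI, rule ccontr)
      fix x y assume "x \<in> verts (Kg k)" "y \<in> verts (Kg k)" "f x div 3 = f y div 3" "x \<noteq> y"
      then show False using f(3) irr by force
    qed
    show "(\<lambda>i. f i div 3) ` verts (Kg k) \<subseteq> verts G" using f(2) by (auto simp: blowV_def)
    show "\<forall>x\<in>verts (Kg k). \<forall>y\<in>verts (Kg k). adj (Kg k) x y \<longrightarrow> adj G (f x div 3) (f y div 3)"
      using f(3) by auto
  qed
  then show False using nc by simp
qed

lemma key:
  assumes k3: "k \<ge> 3"
  and noB: "\<not> contains (induced G B) (Kg (k-1))"
  and T: "contains (induced G T) (Kg (k-1))"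
  and rep: "\<And>v. v \<in> T \<Longrightarrow> v \<in> verts G \<Longrightarrow> \<exists>x\<in>S. x \<in> blowV G B \<and> x div 3 = v"
  and two: "\<And>v. v \<in> T \<Longrightarrow> v \<in> verts G \<Longrightarrow> v \<notin> B \<Longrightarrow>
     \<exists>x\<in>S. \<exists>y\<in>S. x \<noteq> y \<and> x \<in> blowV G B \<and> y \<in> blowV G B \<and> x div 3 = v \<and> y div 3 = v"
  shows "contains (induced (blow G B) S) (Jg k)"
proof -
  obtain f where inj: "inj_on f {0..<k-1}" and img: "f ` {0..<k-1} \<subseteq> verts G \<inter> T"
    and ed: "\<forall>x\<in>{0..<k-1}. \<forall>y\<in>{0..<k-1}. x \<noteq> y \<longrightarrow> adj G (f x) (f y)"
    using T unfolding contains_def by auto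
  have "\<exists>j<k-1. f j \<notin> B"
  proof (rule ccontr)
    assume "\<not> (\<exists>j<k-1. f j \<notin> B)"
    then have "f ` {0..<k-1} \<subseteq> B" by auto
    then have "contains (induced G B) (Kg (k-1))" unfolding contains_def
      using inj img ed by (intro exI[of _ f]) auto
    then show False using noB by simp
  qed
  then obtain j where j: "j < k-1" "f j \<notin> B" by blast
  have fj: "f j \<in> T" "f j \<in> verts G" using img j by auto
  obtain x y where xy: "x \<in> S" "y \<in> S" "x \<noteq> y" "x \<in> blowV G B" "y \<in> blowV G B"
    "x div 3 = f j" "y div 3 = f j" using two[OF fj j(2)] by blast
  define r where "r w = (SOME z. z \<in> S \<and> z \<in> blowV G B \<and> z div 3 = w)" for w
  have r: "r w \<in> S \<and> r w \<in> blowV G B \<and> r w div 3 = w" if "w \<in> T" "w \<in> verts G" for w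
  proof -
    have "\<exists>z. z \<in> S \<and> z \<in> blowV G B \<and> z div 3 = w" using rep[OF that] by blast
    then show ?thesis unfolding r_def by (rule someI_ex)
  qed
  define \<sigma> where "\<sigma> l = (if l < j then l else Suc l)" for l
  define h where "h i = (if i \<le> 1 then j else \<sigma> (i-2))" for i
  define g where "g i = (if i = 0 then x else if i = 1 then y else r (f (\<sigma> (i-2))))" for i
  have hk: "h i < k-1" if "i < k" for i
    unfolding h_def \<sigma>_def using that j(1) by (cases "i \<le> 1"; cases "i - 2 < j") simp_all
  have gp: "g i \<in> S \<and> g i \<in> blowV G B \<and> g i div 3 = f (h i)" if "i < k" for i
  proof (cases "i \<le> 1")
    case True then show ?thesis using xy unfolding g_def h_def by auto
  next
    case False
    then have "h i = \<sigma> (i-2)" unfolding h_def by auto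
    moreover have "h i < k-1" using hk that by auto
    ultimately have "h i < k-1" "h i = \<sigma> (i-2)" by auto
    then have "f (\<sigma> (i-2)) \<in> T" "f (\<sigma> (i-2)) \<in> verts G" using img by auto
    then have "r (f (\<sigma> (i-2))) \<in> S \<and> r (f (\<sigma> (i-2))) \<in> blowV G B \<and> r (f (\<sigma> (i-2))) div 3 = f (\<sigma> (i-2))"
      by (rule r)
    moreover have "g i = r (f (\<sigma> (i-2)))" using False unfolding g_def by auto
    ultimately show ?thesis using \<open>h i = \<sigma> (i-2)\<close> by simp
  qed
  have hne: "h a \<noteq> h b" if "a < k" "b < k" "a \<noteq> b" "{a,b} \<noteq> {0,1}" for a b
    using that unfolding h_def \<sigma>_def by (auto simp: doubleton_eq_iff split: if_splits)
  show ?thesis unfolding contains_def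
  proof (intro exI[of _ g] conjI)
    show "inj_on g (verts (Jg k))"
    proof (rule inj_onI, rule ccontr)
      fix a b assume ab: "a \<in> verts (Jg k)" "b \<in> verts (Jg k)" "g a = g b" "a \<noteq> b"
      show False
      proof (cases "{a,b} = {0,1}")
        case True then show ?thesis using ab xy unfolding g_def by (auto simp: doubleton_eq_iff)
      next
        case False
        then have "h a \<noteq> h b" using hne ab by auto
        moreover have "h a \<in> {0..<k-1}" "h b \<in> {0..<k-1}" using hk ab by auto
        ultimately have "f (h a) \<noteq> f (h b)" using inj unfolding inj_on_def by blast
        then show False using gp ab by (metis atLeastLessThan_iff verts_Jg)
      qed
    qed
    show "g ` verts (Jg k) \<subseteq> verts (induced (blow G B) S)" using gp by auto
    show "\<forall>a\<in>verts (Jg k). \<forall>b\<in>verts (Jg k). adj (Jg k) a b \<longrightarrow> adj (induced (blow G B) S) (g a) (g b)"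
    proof (intro ballI impI)
      fix a b assume ab: "a \<in> verts (Jg k)" "b \<in> verts (Jg k)" "adj (Jg k) a b"
      then have "h a \<noteq> h b" using hne by auto
      moreover have "h a \<in> {0..<k-1}" "h b \<in> {0..<k-1}" using hk ab by auto
      ultimately have "adj G (f (h a)) (f (h b))" using ed by blast
      then show "adj (induced (blow G B) S) (g a) (g b)" using gp ab by auto
    qed
  qed
qed

lemma div3[simp]: "i < 3 \<Longrightarrow> (3*v+i) div 3 = (v::nat)" by simp

lemma blow_arrows:
  assumes k3: "k \<ge> 3" and arr: "vertex_arrows G (Kg (k-1)) (Kg (k-1))"
  and noB: "\<not> contains (induced G B) (Kg (k-1))"
  shows "vertex_arrows (blow G B) (Jg k) (Jg k)"
  unfolding vertex_arrows_def
proof (intro allI impI)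
  fix X1 X2 assume X: "X1 \<union> X2 = verts (blow G B) \<and> X1 \<inter> X2 = {}"
  define P where "P v = (if v \<in> B then 3*v \<in> X1 else
     (3*v \<in> X1 \<and> 3*v+1 \<in> X1) \<or> (3*v \<in> X1 \<and> 3*v+2 \<in> X1) \<or> (3*v+1 \<in> X1 \<and> 3*v+2 \<in> X1))" for v
  define Y1 where "Y1 = {v \<in> verts G. P v}"
  define Y2 where "Y2 = {v \<in> verts G. \<not> P v}"
  have mem: "3*v+i \<in> X1 \<or> 3*v+i \<in> X2" if "v \<in> verts G" "i < mult B v" for v i
    using blowV_mem[OF that] X verts_blow by blast
  have m3: "v \<notin> B \<Longrightarrow> mult B v = 3" for v by (simp add: mult_def)
  have m2: "mult B v \<ge> 1" for v by (simp add: mult_def)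
  have "contains (induced G Y1) (Kg (k-1)) \<or> contains (induced G Y2) (Kg (k-1))"
  proof -
    have "Y1 \<union> Y2 = verts G \<and> Y1 \<inter> Y2 = {}" unfolding Y1_def Y2_def by auto
    then show ?thesis using arr unfolding vertex_arrows_def by blast
  qed
  then show "contains (induced (blow G B) X1) (Jg k) \<or> contains (induced (blow G B) X2) (Jg k)"
  proof
    assume c: "contains (induced G Y1) (Kg (k-1))"
    have "contains (induced (blow G B) X1) (Jg k)"
    proof (rule key[OF k3 noB c])
      fix v assume v: "v \<in> Y1" "v \<in> verts G"
      show "\<exists>x\<in>X1. x \<in> blowV G B \<and> x div 3 = v"
      proof (cases "v \<in> B")
        case True then show ?thesis using v blowV_mem[of v G 0 B] m2[of v] unfolding Y1_def P_def
          by (intro bexI[of _ "3*v"]) auto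
      next
        case False
        have b: "3*v+i \<in> blowV G B" if "i < 3" for i using blowV_mem[of v G i B] m3[OF False] v that by auto
        have "3*v \<in> X1 \<or> 3*v+1 \<in> X1" using v False unfolding Y1_def P_def by auto
        then show ?thesis
        proof
          assume "3*v \<in> X1" then show ?thesis using b[of 0] div3[of 0 v] by (intro bexI[of _ "3*v"]) auto
        next
          assume "3*v+1 \<in> X1" then show ?thesis using b[of 1] div3[of 1 v] by (intro bexI[of _ "3*v+1"]) auto
        qed
      qed
    next
      fix v assume v: "v \<in> Y1" "v \<in> verts G" "v \<notin> B"
      have b: "3*v+i \<in> blowV G B" if "i < 3" for i using blowV_mem[of v G i B] m3[OF v(3)] v that by auto
      have "(3*v \<in> X1 \<and> 3*v+1 \<in> X1) \<or> (3*v \<in> X1 \<and> 3*v+2 \<in> X1) \<or> (3*v+1 \<in> X1 \<and> 3*v+2 \<in> X1)"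
        using v unfolding Y1_def P_def by auto
      then show "\<exists>x\<in>X1. \<exists>y\<in>X1. x \<noteq> y \<and> x \<in> blowV G B \<and> y \<in> blowV G B \<and> x div 3 = v \<and> y div 3 = v"
      proof (elim disjE)
        assume "3*v \<in> X1 \<and> 3*v+1 \<in> X1" then show ?thesis using b[of 0] b[of 1] div3[of 0 v] div3[of 1 v]
          by (intro bexI[of _ "3*v"] bexI[of _ "3*v+1"]) auto
      next
        assume "3*v \<in> X1 \<and> 3*v+2 \<in> X1" then show ?thesis using b[of 0] b[of 2] div3[of 0 v] div3[of 2 v]
          by (intro bexI[of _ "3*v"] bexI[of _ "3*v+2"]) auto
      next
        assume "3*v+1 \<in> X1 \<and> 3*v+2 \<in> X1" then show ?thesis using b[of 1] b[of 2] div3[of 1 v] div3[of 2 v]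
          by (intro bexI[of _ "3*v+1"] bexI[of _ "3*v+2"]) auto
      qed
    qed
    then show ?thesis by simp
  next
    assume c: "contains (induced G Y2) (Kg (k-1))"
    have "contains (induced (blow G B) X2) (Jg k)"
    proof (rule key[OF k3 noB c])
      fix v assume v: "v \<in> Y2" "v \<in> verts G"
      show "\<exists>x\<in>X2. x \<in> blowV G B \<and> x div 3 = v"
      proof (cases "v \<in> B")
        case True then show ?thesis using v blowV_mem[of v G 0 B] m2[of v] mem[of v 0] unfolding Y2_def P_def
          by (intro bexI[of _ "3*v"]) auto
      next
        case False
        have b: "3*v+i \<in> blowV G B" "3*v+i \<in> X1 \<or> 3*v+i \<in> X2" if "i < 3" for i
          using blowV_mem[of v G i B] mem[of v i] m3[OF False] v that by auto
        have "3*v \<in> X2 \<or> 3*v+1 \<in> X2" using v False b[of 0] b[of 1] unfolding Y2_def P_def by auto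
        then show ?thesis
        proof
          assume "3*v \<in> X2" then show ?thesis using b(1)[of 0] div3[of 0 v] by (intro bexI[of _ "3*v"]) auto
        next
          assume "3*v+1 \<in> X2" then show ?thesis using b(1)[of 1] div3[of 1 v] by (intro bexI[of _ "3*v+1"]) auto
        qed
      qed
    next
      fix v assume v: "v \<in> Y2" "v \<in> verts G" "v \<notin> B"
      have b: "3*v+i \<in> blowV G B" "3*v+i \<in> X1 \<or> 3*v+i \<in> X2" if "i < 3" for i
        using blowV_mem[of v G i B] mem[of v i] m3[OF v(3)] v that by auto
      have "(3*v \<in> X2 \<and> 3*v+1 \<in> X2) \<or> (3*v \<in> X2 \<and> 3*v+2 \<in> X2) \<or> (3*v+1 \<in> X2 \<and> 3*v+2 \<in> X2)"
        using v b[of 0] b[of 1] b[of 2] unfolding Y2_def P_def by auto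
      then show "\<exists>x\<in>X2. \<exists>y\<in>X2. x \<noteq> y \<and> x \<in> blowV G B \<and> y \<in> blowV G B \<and> x div 3 = v \<and> y div 3 = v"
      proof (elim disjE)
        assume "3*v \<in> X2 \<and> 3*v+1 \<in> X2" then show ?thesis using b(1)[of 0] b(1)[of 1] div3[of 0 v] div3[of 1 v]
          by (intro bexI[of _ "3*v"] bexI[of _ "3*v+1"]) auto
      next
        assume "3*v \<in> X2 \<and> 3*v+2 \<in> X2" then show ?thesis using b(1)[of 0] b(1)[of 2] div3[of 0 v] div3[of 2 v]
          by (intro bexI[of _ "3*v"] bexI[of _ "3*v+2"]) auto
      next
        assume "3*v+1 \<in> X2 \<and> 3*v+2 \<in> X2" then show ?thesis using b(1)[of 1] b(1)[of 2] div3[of 1 v] div3[of 2 v]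
          by (intro bexI[of _ "3*v+1"] bexI[of _ "3*v+2"]) auto
      qed
    qed
    then show ?thesis by simp
  qed
qed

lemma nat_ceil_ge: "real m \<le> x \<Longrightarrow> m \<le> nat \<lceil>x\<rceil>"
proof -
  assume "real m \<le> x"
  then have "\<lceil>real m\<rceil> \<le> \<lceil>x\<rceil>" by (rule ceiling_mono)
  then have "int m \<le> \<lceil>x\<rceil>" by simp
  then show ?thesis by linarith
qed

lemma sum_mult: assumes "finite V" "B \<subseteq> V" shows "sum (mult B) V = 2 * card B + 3 * (card V - card B)"
proof -
  have "sum (mult B) V = sum (mult B) (V - B) + sum (mult B) B" using sum.subset_diff[OF assms(2,1)] .
  also have "sum (mult B) B = 2 * card B" by (simp add: mult_def)
  also have "sum (mult B) (V - B) = 3 * card (V - B)" by (simp add: mult_def)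
  also have "card (V - B) = card V - card B" using assms by (simp add: card_Diff_subset finite_subset)
  finally show ?thesis by simp
qed

theorem mainTheorem7:
  fixes k :: nat
  assumes "k \<ge> 3"
  shows "Fv (Jg k) (Jg k) k \<le> nat \<lceil>5 * real (Fv (Kg (k - 1)) (Kg (k - 1)) k) / 2\<rceil>"
proof -
  define P2 where "P2 n = (\<exists>G. simple_graph G \<and> card (verts G) = n \<and> \<not> contains G (Kg k) \<and> vertex_arrows G (Kg (k-1)) (Kg (k-1)))" for n
  define P1 where "P1 n = (\<exists>G. simple_graph G \<and> card (verts G) = n \<and> \<not> contains G (Kg k) \<and> vertex_arrows G (Jg k) (Jg k))" for n
  have F1: "Fv (Jg k) (Jg k) k = Least P1" unfolding Fv_def P1_def by simp
  have F2: "Fv (Kg (k-1)) (Kg (k-1)) k = Least P2" unfolding Fv_def P2_def by simp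
  show ?thesis
  proof (cases "\<exists>n. P2 n")
    case False
    have "P1 = P2"
    proof
      fix n
      have "P1 n \<Longrightarrow> P2 n" unfolding P1_def P2_def using arrows_J_K[of k] assms by auto
      then show "P1 n = P2 n" using False by auto
    qed
    then have "Fv (Jg k) (Jg k) k = Fv (Kg (k-1)) (Kg (k-1)) k" using F1 F2 by simp
    then show ?thesis by (intro nat_ceil_ge) simp
  next
    case True
    define n where "n = Least P2"
    have "P2 n" unfolding n_def using True by (rule LeastI_ex)
    then obtain G where sg: "simple_graph G" and cG: "card (verts G) = n" and kf: "\<not> contains G (Kg k)"
      and arr: "vertex_arrows G (Kg (k-1)) (Kg (k-1))" unfolding P2_def by blast
    have fin: "finite (verts G)" using sg unfolding simple_graph_def by blast
    have noK_empty: "\<not> contains F (Kg (k-1))" if "verts F = {}" for F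
      using that assms unfolding contains_def by auto
    have "verts G \<noteq> {}"
    proof
      assume e: "verts G = {}"
      have "contains (induced G (verts G)) (Kg (k-1)) \<or> contains (induced G {}) (Kg (k-1))"
        using arr unfolding vertex_arrows_def by simp
      then show False using noK_empty e by auto
    qed
    then obtain v where v: "v \<in> verts G" by blast
    define G' where "G' = induced G (verts G - {v})"
    have vG': "verts G' = verts G - {v}" unfolding G'_def by auto
    have "card (verts G') = n - 1" using vG' v fin cG by simp
    moreover have "n - 1 < n" using cG v fin by (metis card_gt_0_iff diff_less equals0D zero_less_one)
    ultimately have "\<not> P2 (card (verts G'))" unfolding n_def by (metis not_less_Least)
    moreover have "simple_graph G'" unfolding G'_def using sg by (rule simple_induced)
    moreover have "\<not> contains G' (Kg k)" unfolding G'_def using kf contains_induced_sub by blast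
    ultimately have "\<not> vertex_arrows G' (Kg (k-1)) (Kg (k-1))" unfolding P2_def by blast
    then obtain X1 X2 where X: "X1 \<union> X2 = verts G - {v}" "X1 \<inter> X2 = {}"
      and n1: "\<not> contains (induced G' X1) (Kg (k-1))" and n2: "\<not> contains (induced G' X2) (Kg (k-1))"
      unfolding vertex_arrows_def vG' by blast
    have n1': "\<not> contains (induced G X1) (Kg (k-1))" using n1 X(1) unfolding G'_def
      by (subst (asm) induced_induced) auto
    have n2': "\<not> contains (induced G X2) (Kg (k-1))" using n2 X(1) unfolding G'_def
      by (subst (asm) induced_induced) auto
    have finX: "finite X1" "finite X2" using X(1) fin by (metis finite_Diff finite_Un)+
    have cX: "card X1 + card X2 = n - 1" using card_Un_disjoint[OF finX X(2)] X(1) v fin cG by simp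
    define B where "B = (if card X2 \<le> card X1 then X1 else X2)"
    have BV: "B \<subseteq> verts G" unfolding B_def using X(1) by auto
    have nB: "\<not> contains (induced G B) (Kg (k-1))" unfolding B_def using n1' n2' by auto
    have cB: "n - 1 \<le> 2 * card B" unfolding B_def using cX by auto
    have cBn: "card B \<le> n" using card_mono[OF fin BV] cG by simp
    have "P1 (card (verts (blow G B)))" unfolding P1_def
      using blow_simple[OF sg] blow_Kfree[OF sg kf] blow_arrows[OF assms arr nB] by blast
    then have le: "Fv (Jg k) (Jg k) k \<le> card (blowV G B)" unfolding F1 by (simp add: Least_le)
    have cb: "card (blowV G B) = 2 * card B + 3 * (n - card B)"
      using blow_card[OF fin] sum_mult[OF fin BV] cG by simp
    have "2 * card (blowV G B) \<le> 5 * n + 1" using cb cB cBn by linarith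
    then have "real (card (blowV G B)) \<le> 5 * real n / 2 + 1/2" by linarith
    then have "int (card (blowV G B)) \<le> \<lceil>5 * real n / 2\<rceil>"
      unfolding le_ceiling_iff by simp
    then have "card (blowV G B) \<le> nat \<lceil>5 * real n / 2\<rceil>" by linarith
    then show ?thesis using le F2 n_def by simp
  qed
qed

end
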